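(* For all integers $N\ge1$ and $\ell\ge1$, the linear map $\partial^\phi_{<N}:\operatorname{gr}^F_\ell(\mathcal B)_N\to\bigoplus_{r\ge1,\ 3\le2r+1\le N}\operatorname{gr}^F_{\ell-1}(\mathcal B)_{N-2r-1}$, $\ w\mapsto\sum_{r}(\phi\otimes\mathrm{id})\big(\partial^{(\ell)}_{2r+1}(w)\big)$, is an isomorphism of $\mathbb Q$-vector spaces.
   Context: $\mathcal X=\{x_0,x_1\}$, $\mathbb Q\langle\mathcal X\rangle$ free noncommutative polynomials graded by weight (number of letters). $\mathcal B$ is the span of all concatenations of $x_0x_1$ and $x_0x_0x_1$; the level of such a word is the number of blocks $x_0x_0x_1$; $F_\ell\mathcal B$ = span of words of level $\le\ell$; $\operatorname{gr}^F_\ell(\mathcal B)_N=(F_\ell\mathcal B)_N/(F_{\ell-1}\mathcal B)_N$, identified with the span of words of weight $N$ and level exactly $\ell$. For letters: $I(x_1;f;x_0)=f$, $I(x_0;f;x_1)=S(f)$ with $S(\varepsilon_1\cdots\varepsilon_m)=(-1)^m\varepsilon_m\cdots\varepsilon_1$, $I(\varepsilon;f;\varepsilon)$ = coefficient of $\mathbf1$ in $f$ times $\mathbf1$. For a word $w=\varepsilon_1\cdots\varepsilon_N$, $\partial_{2r+1}(w)=\sum_{j=0}^{N-2r-1}I(\varepsilon_j;\varepsilon_{j+1}\cdots\varepsilon_{j+2r+1};\varepsilon_{j+2r+2})\otimes\varepsilon_1\cdots\varepsilon_j\varepsilon_{j+2r+2}\cdots\varepsilon_N$ ($\varepsilon_0=x_1,\varepsilon_{N+1}=x_0$).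 For $w$ of level $\ell$, $\partial^{(\ell)}_{2r+1}(w)$ is $\partial_{2r+1}(w)$ with all summands whose right factor has level $\ne\ell-1$ discarded; its left factors lie in $\mathcal B^1=\operatorname{span}\{(x_0x_1)^ax_0x_0x_1(x_0x_1)^b,\ (x_0x_1)^nx_0: a,b,n\ge0\}$. $\phi:\mathcal B^1\to\mathbb Q$ is linear with $\phi((x_0x_1)^ax_0x_0x_1(x_0x_1)^b)=c^{a+b+1}_{a,b}$ and $\phi((x_0x_1)^nx_0)=2(-1)^n$, where $c^r_{a,b}=2(-1)^r\big(\binom{2r}{2b+2}-(1-2^{-2r})\binom{2r}{2a+1}\big)$; $\phi\otimes\mathrm{id}$ is followed by the identification $\mathbb Q\otimes V=V$. *)

theory Defs
  imports Complex_Main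
begin

text \<open>Letters x0, x1; words are lists of letters (weight = length).
  Noncommutative polynomials over Q are represented as finitely supported
  functions word => rat; tensors Q<X> (x) Q<X> as functions on pairs of words.\<close>

datatype letter = X0 | X1

type_synonym word = "letter list"
type_synonym poly = "word \<Rightarrow> rat"
type_synonym tens = "word \<times> word \<Rightarrow> rat"

definition blk :: "bool \<Rightarrow> word" where
  "blk b = (if b then [X0, X0, X1] else [X0, X1])"

definition has_level :: "nat \<Rightarrow> word \<Rightarrow> bool" where
  "has_level l w \<longleftrightarrow> (\<exists>bs. w = concat (map blk bs) \<and> count_list bs True = l)"

text \<open>Basis of gr^F_l(B)_N: words of weight N and level exactly l.\<close>
definition grB :: "nat \<Rightarrow> nat \<Rightarrow> word set" where
  "grB N l = {w. length w = N \<and> has_level l w}"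

definition monom :: "rat \<Rightarrow> word \<Rightarrow> poly" where
  "monom c u = (\<lambda>v. if v = u then c else 0)"

definition antipode :: "word \<Rightarrow> poly" where
  "antipode u = monom ((-1) ^ length u) (rev u)"

definition Ifun :: "letter \<Rightarrow> word \<Rightarrow> letter \<Rightarrow> poly" where
  "Ifun a f b =
     (if a = X1 \<and> b = X0 then monom 1 f
      else if a = X0 \<and> b = X1 then antipode f
      else monom (if f = [] then 1 else 0) [])"

definition eps :: "word \<Rightarrow> nat \<Rightarrow> letter" where
  "eps w k = (if k = 0 then X1 else if k \<le> length w then w ! (k - 1) else X0)"

definition tensor :: "poly \<Rightarrow> poly \<Rightarrow> tens" where
  "tensor p q = (\<lambda>(u, v). p u * q v)"

definition partial :: "nat \<Rightarrow> word \<Rightarrow> tens" where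
  "partial r w = (\<lambda>x. \<Sum>j | j + 2 * r + 1 \<le> length w.
      tensor (Ifun (eps w j) (take (2 * r + 1) (drop j w)) (eps w (j + 2 * r + 2)))
             (monom 1 (take j w @ drop (j + 2 * r + 1) w)) x)"

definition partial_l :: "nat \<Rightarrow> nat \<Rightarrow> word \<Rightarrow> tens" where
  "partial_l l r w = (\<lambda>(u, v). if has_level (l - 1) v then partial r w (u, v) else 0)"

definition pw :: "nat \<Rightarrow> word" where
  "pw n = concat (replicate n [X0, X1])"

definition cc :: "nat \<Rightarrow> nat \<Rightarrow> nat \<Rightarrow> rat" where
  "cc r a b = 2 * (-1) ^ r * (of_nat ((2 * r) choose (2 * b + 2))
              - (1 - 1 / 2 ^ (2 * r)) * of_nat ((2 * r) choose (2 * a + 1)))"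

text \<open>phi on the basis words of B^1 (extended by 0 on other words).\<close>
definition phi_word :: "word \<Rightarrow> rat" where
  "phi_word u =
     (if \<exists>a b. u = pw a @ [X0, X0, X1] @ pw b then
        (case (THE (a, b). u = pw a @ [X0, X0, X1] @ pw b) of (a, b) \<Rightarrow> cc (a + b + 1) a b)
      else if \<exists>n. u = pw n @ [X0] then
        2 * (-1) ^ (THE n. u = pw n @ [X0])
      else 0)"

text \<open>(phi (x) id) followed by Q (x) V = V.\<close>
definition phi_tensor :: "tens \<Rightarrow> poly" where
  "phi_tensor T = (\<lambda>v. \<Sum>u | T (u, v) \<noteq> 0. phi_word u * T (u, v))"

text \<open>Image of a basis word in the direct sum over r (encoded as functions on
  pairs (r, v)); components outside 3 <= 2r+1 <= N are zero.\<close>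
definition dphi :: "nat \<Rightarrow> nat \<Rightarrow> word \<Rightarrow> nat \<times> word \<Rightarrow> rat" where
  "dphi N l w = (\<lambda>(r, v). if 1 \<le> r \<and> 2 * r + 1 \<le> N then phi_tensor (partial_l l r w) v else 0)"

definition Phi :: "nat \<Rightarrow> nat \<Rightarrow> poly \<Rightarrow> nat \<times> word \<Rightarrow> rat" where
  "Phi N l f = (\<lambda>x. \<Sum>w\<in>grB N l. f w * dphi N l w x)"

definition GrDom :: "nat \<Rightarrow> nat \<Rightarrow> poly set" where
  "GrDom N l = {f. \<forall>w. f w \<noteq> 0 \<longrightarrow> w \<in> grB N l}"

definition GrCod :: "nat \<Rightarrow> nat \<Rightarrow> (nat \<times> word \<Rightarrow> rat) set" where
  "GrCod N l = {g. \<forall>r v. g (r, v) \<noteq> 0 \<longrightarrow>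
       1 \<le> r \<and> 2 * r + 1 \<le> N \<and> v \<in> grB (N - (2 * r + 1)) (l - 1)}"

end

theory Submission
  imports Defs "HOL-Library.Function_Algebras"
begin


lemma pw_0[simp]: "pw 0 = []" by (simp add: pw_def)
lemma pw_Suc[simp]: "pw (Suc n) = X0 # X1 # pw n" by (simp add: pw_def)
lemma length_pw[simp]: "length (pw n) = 2 * n" by (induction n) auto

lemma pw_001_inj:
  "pw a @ X0 # X0 # X1 # x = pw a' @ X0 # X0 # X1 # y \<Longrightarrow> a = a' \<and> x = y"
proof (induction a arbitrary: a')
  case 0 then show ?case by (cases a') auto
next
  case (Suc a) then show ?case by (cases a') auto
qed

lemma pw_inj: "pw a = pw b \<Longrightarrow> a = b"
  by (metis length_pw mult_left_cancel zero_neq_numeral)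

lemma pw_001_ne: "pw a @ X0 # X0 # X1 # x \<noteq> pw n @ [X0]"
proof (induction a arbitrary: n)
  case 0 then show ?case by (cases n) auto
next
  case (Suc a) then show ?case by (cases n) auto
qed

lemma phi_word_cc: "phi_word (pw a @ [X0, X0, X1] @ pw b) = cc (a + b + 1) a b"
proof -
  have ex: "\<exists>a' b'. pw a @ [X0, X0, X1] @ pw b = pw a' @ [X0, X0, X1] @ pw b'" by blast
  have "(THE (a', b'). pw a @ [X0, X0, X1] @ pw b = pw a' @ [X0, X0, X1] @ pw b') = (a, b)"
  proof (rule the_equality)
    show "case (a, b) of (a', b') \<Rightarrow> pw a @ [X0, X0, X1] @ pw b = pw a' @ [X0, X0, X1] @ pw b'" by simp
  next
    fix p assume "case p of (a', b') \<Rightarrow> pw a @ [X0, X0, X1] @ pw b = pw a' @ [X0, X0, X1] @ pw b'"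
    then show "p = (a, b)"
      by (cases p) (auto dest!: pw_001_inj pw_inj)
  qed
  then show ?thesis unfolding phi_word_def using ex by simp
qed

lemma phi_word_pw0: "phi_word (pw n @ [X0]) = 2 * (-1) ^ n"
proof -
  have ne: "\<not> (\<exists>a b. pw n @ [X0] = pw a @ [X0, X0, X1] @ pw b)"
    using pw_001_ne by (metis append_Cons append_Nil)
  have "(THE n'. pw n @ [X0] = pw n' @ [X0]) = n"
    by (rule the_equality) (auto dest: pw_inj)
  then show ?thesis unfolding phi_word_def using ne by auto
qed

lemma phi_word_other:
  "\<not> (\<exists>a b. u = pw a @ [X0, X0, X1] @ pw b) \<Longrightarrow> \<not> (\<exists>n. u = pw n @ [X0]) \<Longrightarrow> phi_word u = 0"
  unfolding phi_word_def by auto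

subsection \<open>2-adic integrality\<close>

definition z2 :: "rat \<Rightarrow> bool" where
  "z2 q \<longleftrightarrow> (\<exists>a b::int. odd b \<and> q = of_int a / of_int b)"
definition ev2 :: "rat \<Rightarrow> bool" where
  "ev2 q \<longleftrightarrow> (\<exists>a b::int. odd b \<and> even a \<and> q = of_int a / of_int b)"

lemma odd_nz: "odd (b::int) \<Longrightarrow> (of_int b :: rat) \<noteq> 0" by auto

lemma cross_int: assumes "(of_int a / of_int b :: rat) = of_int p / of_int q" "odd b" "odd q"
  shows "a * q = p * b"
proof -
  have "(of_int a * of_int q :: rat) = of_int p * of_int b"
    using frac_eq_eq[of "of_int b :: rat" "of_int q" "of_int a" "of_int p"] assms odd_nz by blast
  then have "(of_int (a * q) :: rat) = of_int (p * b)" by simp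
  then show ?thesis using of_int_eq_iff by blast
qed

lemma z2_int[simp]: "z2 (of_int a)"
  unfolding z2_def by (rule exI[of _ a], rule exI[of _ 1]) simp
lemma z2_nat[simp]: "z2 (of_nat a)"
  using z2_int[of "int a"] by simp
lemma ev2_imp_z2: "ev2 q \<Longrightarrow> z2 q" unfolding z2_def ev2_def by blast
lemma ev2_0[simp]: "ev2 0" unfolding ev2_def by (rule exI[of _ 0], rule exI[of _ 1]) simp

lemma z2_add: assumes "z2 x" "z2 y" shows "z2 (x + y)"
proof -
  from assms obtain a b c d :: int where "odd b" "x = of_int a / of_int b" "odd d" "y = of_int c / of_int d"
    unfolding z2_def by blast
  then have "x + y = of_int (a * d + c * b) / of_int (b * d)"
    using odd_nz[OF \<open>odd b\<close>] odd_nz[OF \<open>odd d\<close>] by (simp add: add_frac_eq)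
  moreover have "odd (b * d)" using \<open>odd b\<close> \<open>odd d\<close> by simp
  ultimately show ?thesis unfolding z2_def by blast
qed

lemma z2_mult: assumes "z2 x" "z2 y" shows "z2 (x * y)"
proof -
  from assms obtain a b c d :: int where "odd b" "x = of_int a / of_int b" "odd d" "y = of_int c / of_int d"
    unfolding z2_def by blast
  then have "x * y = of_int (a * c) / of_int (b * d)" by simp
  moreover have "odd (b * d)" using \<open>odd b\<close> \<open>odd d\<close> by simp
  ultimately show ?thesis unfolding z2_def by blast
qed

lemma z2_uminus: "z2 x \<Longrightarrow> z2 (- x)"
  unfolding z2_def by (metis minus_divide_left of_int_minus)

lemma z2_diff: "z2 x \<Longrightarrow> z2 y \<Longrightarrow> z2 (x - y)"
  using z2_add z2_uminus by (metis diff_conv_add_uminus)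

lemma z2_pow: "z2 x \<Longrightarrow> z2 (x ^ n)"
  by (induction n) (auto intro: z2_mult simp: z2_int[of 1, simplified])

lemma z2_sum: "(\<And>x. x \<in> A \<Longrightarrow> z2 (f x)) \<Longrightarrow> z2 (sum f A)"
  by (induction A rule: infinite_finite_induct) (auto intro: z2_add simp: z2_int[of 0, simplified])

lemma ev2_add: assumes "ev2 x" "ev2 y" shows "ev2 (x + y)"
proof -
  from assms obtain a b c d :: int where "odd b" "even a" "x = of_int a / of_int b" "odd d" "even c" "y = of_int c / of_int d"
    unfolding ev2_def by blast
  then have "x + y = of_int (a * d + c * b) / of_int (b * d)"
    using odd_nz[OF \<open>odd b\<close>] odd_nz[OF \<open>odd d\<close>] by (simp add: add_frac_eq)
  then show ?thesis unfolding ev2_def using \<open>odd b\<close> \<open>odd d\<close> \<open>even a\<close> \<open>even c\<close>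
    by (intro exI[of _ "a * d + c * b"] exI[of _ "b * d"]) auto
qed

lemma ev2_mult: assumes "ev2 x" "z2 y" shows "ev2 (x * y)"
proof -
  from assms obtain a b c d :: int where "odd b" "even a" "x = of_int a / of_int b" "odd d" "y = of_int c / of_int d"
    unfolding ev2_def z2_def by blast
  then have "x * y = of_int (a * c) / of_int (b * d)" by simp
  moreover have "odd (b * d)" "even (a * c)" using \<open>odd b\<close> \<open>odd d\<close> \<open>even a\<close> by auto
  ultimately show ?thesis unfolding ev2_def by blast
qed

lemma ev2_mult2: "z2 y \<Longrightarrow> ev2 x \<Longrightarrow> ev2 (y * x)"
  using ev2_mult by (simp add: mult.commute)

lemma ev2_uminus: "ev2 x \<Longrightarrow> ev2 (- x)"
  unfolding ev2_def by (metis even_minus minus_divide_left of_int_minus)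

lemma ev2_diff: "ev2 x \<Longrightarrow> ev2 y \<Longrightarrow> ev2 (x - y)"
  using ev2_add ev2_uminus by (metis diff_conv_add_uminus)

lemma ev2_sum: "(\<And>x. x \<in> A \<Longrightarrow> ev2 (f x)) \<Longrightarrow> ev2 (sum f A)"
  by (induction A rule: infinite_finite_induct) (auto intro: ev2_add)

lemma ev2_even_int: "even a \<Longrightarrow> ev2 (of_int a)"
  unfolding ev2_def by (rule exI[of _ a], rule exI[of _ 1]) simp

lemma not_ev2_odd_int: assumes "odd a" shows "\<not> ev2 (of_int a)"
proof
  assume "ev2 (of_int a)"
  then obtain c d :: int where "odd d" "even c" "of_int a = (of_int c / of_int d :: rat)"
    unfolding ev2_def by blast
  then have "of_int (a * d) = (of_int c :: rat)" using odd_nz[OF \<open>odd d\<close>] by (simp add: field_simps)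
  then have "a * d = c" by linarith
  then show False using assms \<open>odd d\<close> \<open>even c\<close> by auto
qed

lemma unit_decomp: assumes "z2 x" "\<not> ev2 x" obtains a b :: int where "odd a" "odd b" "x = of_int a / of_int b"
  using assms unfolding z2_def ev2_def by blast

lemma unit_add: assumes "z2 x" "\<not> ev2 x" "z2 y" "\<not> ev2 y" shows "ev2 (x + y)"
proof -
  obtain a b where "odd a" "odd b" "x = of_int a / of_int b" using unit_decomp assms(1,2) by blast
  moreover obtain c d where "odd c" "odd d" "y = of_int c / of_int d" using unit_decomp assms(3,4) by blast
  ultimately have "x + y = of_int (a * d + c * b) / of_int (b * d)"
    using odd_nz[OF \<open>odd b\<close>] odd_nz[OF \<open>odd d\<close>] by (simp add: add_frac_eq)
  then show ?thesis unfolding ev2_def using \<open>odd a\<close> \<open>odd b\<close> \<open>odd c\<close> \<open>odd d\<close>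
    by (intro exI[of _ "a * d + c * b"] exI[of _ "b * d"]) auto
qed

lemma unit_mult: assumes "z2 x" "\<not> ev2 x" "z2 y" "\<not> ev2 y" shows "\<not> ev2 (x * y)"
proof
  assume e: "ev2 (x * y)"
  obtain a b where "odd a" "odd b" "x = of_int a / of_int b" using unit_decomp assms(1,2) by blast
  moreover obtain c d where "odd c" "odd d" "y = of_int c / of_int d" using unit_decomp assms(3,4) by blast
  ultimately have "x * y = of_int (a * c) / of_int (b * d)" by simp
  moreover obtain p q :: int where "odd q" "even p" "x * y = of_int p / of_int q" using e unfolding ev2_def by blast
  ultimately have "of_int (a * c) / of_int (b * d) = (of_int p / of_int q :: rat)" by simp
  moreover have "odd (b * d)" using \<open>odd b\<close> \<open>odd d\<close> by simp
  ultimately have "a * c * q = p * (b * d)" using cross_int[of "a * c" "b * d" p q] \<open>odd q\<close> by blast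
  then show False using \<open>odd a\<close> \<open>odd c\<close> \<open>odd q\<close> \<open>even p\<close> by (metis even_mult_iff)
qed

lemma nonunit_add: "\<not> ev2 x \<Longrightarrow> ev2 y \<Longrightarrow> \<not> ev2 (x + y)"
  using ev2_diff by fastforce

lemma not_ev2_nz: "\<not> ev2 x \<Longrightarrow> x \<noteq> 0" by auto

lemma int_2adic: "n \<noteq> (0::int) \<Longrightarrow> \<exists>i (o'::int). odd o' \<and> n = 2 ^ i * o'"
proof (induction "nat \<bar>n\<bar>" arbitrary: n rule: less_induct)
  case less
  show ?case
  proof (cases "odd n")
    case True then show ?thesis by (intro exI[of _ 0] exI[of _ n]) simp
  next
    case False
    then obtain m where m: "n = 2 * m" by blast
    with less.prems have "m \<noteq> 0" by auto
    have "nat \<bar>m\<bar> < nat \<bar>n\<bar>" using m \<open>m \<noteq> 0\<close> by auto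
    from less.hyps[OF this \<open>m \<noteq> 0\<close>] obtain i o' where "odd o'" "m = 2 ^ i * o'" by blast
    then show ?thesis using m by (intro exI[of _ "Suc i"] exI[of _ o']) auto
  qed
qed

lemma rat_2adic: assumes "q \<noteq> (0::rat)"
  obtains i j :: nat and a b :: int where "odd a" "odd b" "q = 2 ^ i * of_int a / (2 ^ j * of_int b)"
proof -
  obtain n d where nd: "quotient_of q = (n, d)" by (cases "quotient_of q")
  then have q: "q = of_int n / of_int d" and "d > 0" using quotient_of_div quotient_of_denom_pos by blast+
  then have "n \<noteq> 0" using assms by auto
  obtain i a where "odd a" "n = 2 ^ i * a" using int_2adic[OF \<open>n \<noteq> 0\<close>] by blast
  moreover obtain j b where "odd b" "d = 2 ^ j * b" using int_2adic \<open>d > 0\<close> by (metis less_irrefl)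
  ultimately show ?thesis using that q by simp
qed

lemma z2_pow2_unit: "odd a \<Longrightarrow> odd b \<Longrightarrow> z2 (2 ^ k * of_int a / of_int b)"
  unfolding z2_def by (rule exI[of _ "2^k * a"], rule exI[of _ b]) simp

lemma unit_of_odd: "odd a \<Longrightarrow> odd b \<Longrightarrow> \<not> ev2 (of_int a / of_int b)"
proof
  assume "odd a" "odd b" "ev2 (of_int a / of_int b)"
  then obtain p q :: int where "odd q" "even p" "of_int a / of_int b = (of_int p / of_int q :: rat)"
    unfolding ev2_def by blast
  then have "a * q = p * b" using cross_int \<open>odd b\<close> \<open>odd q\<close> by blast
  then show False using \<open>odd a\<close> \<open>odd q\<close> \<open>even p\<close> by (metis even_mult_iff)
qed

lemma normalize_2adic:
  assumes "finite S" "w0 \<in> S" "g w0 \<noteq> 0"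
  shows "\<exists>c. c \<noteq> 0 \<and> (\<forall>w\<in>S. z2 (c * g w)) \<and> (\<exists>w\<in>S. \<not> ev2 (c * g w))"
proof -
  let ?S = "{w\<in>S. g w \<noteq> 0}"
  have ex: "\<forall>w\<in>?S. \<exists>t::nat \<times> nat \<times> int \<times> int. odd (fst (snd (snd t))) \<and> odd (snd (snd (snd t))) \<and>
      g w = 2 ^ fst t * of_int (fst (snd (snd t))) / (2 ^ fst (snd t) * of_int (snd (snd (snd t))))"
  proof
    fix w assume "w \<in> ?S"
    then have "g w \<noteq> 0" by simp
    then obtain i j a b where "odd a" "odd b" "g w = 2 ^ i * of_int a / (2 ^ j * of_int b)"
      by (rule rat_2adic)
    then show "\<exists>t::nat \<times> nat \<times> int \<times> int. odd (fst (snd (snd t))) \<and> odd (snd (snd (snd t))) \<and>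
      g w = 2 ^ fst t * of_int (fst (snd (snd t))) / (2 ^ fst (snd t) * of_int (snd (snd (snd t))))"
      by (intro exI[of _ "(i, j, a, b)"]) simp
  qed
  from bchoice[OF ex] obtain F where F: "\<forall>w\<in>?S. odd (fst (snd (snd (F w)))) \<and> odd (snd (snd (snd (F w)))) \<and>
      g w = 2 ^ fst (F w) * of_int (fst (snd (snd (F w)))) / (2 ^ fst (snd (F w)) * of_int (snd (snd (snd (F w)))))" ..
  define I where "I w = fst (F w)" for w
  define J where "J w = fst (snd (F w))" for w
  define A where "A w = fst (snd (snd (F w)))" for w
  define B where "B w = snd (snd (snd (F w)))" for w
  have IJ: "\<And>w. w \<in> ?S \<Longrightarrow> odd (A w) \<and> odd (B w) \<and>
      g w = 2 ^ I w * of_int (A w) / (2 ^ J w * of_int (B w))"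
    using F unfolding I_def J_def A_def B_def by blast
  define e where "e w = int (I w) - int (J w)" for w
  have fin: "finite ?S" using assms by auto
  have ne: "?S \<noteq> {}" using assms by auto
  obtain wm where wm: "wm \<in> ?S" "\<And>w. w \<in> ?S \<Longrightarrow> e wm \<le> e w"
  proof -
    have "Min (e ` ?S) \<in> e ` ?S" using fin ne by simp
    then obtain wm where "Min (e ` ?S) = e wm" "wm \<in> ?S" by (rule imageE)
    moreover have "\<And>w. w \<in> ?S \<Longrightarrow> Min (e ` ?S) \<le> e w" using fin by simp
    ultimately show ?thesis using that by simp
  qed
  define c :: rat where "c = 2 ^ J wm / 2 ^ I wm"
  have "c \<noteq> 0" by (simp add: c_def)
  moreover have "\<forall>w\<in>S. z2 (c * g w)"
  proof
    fix w assume "w \<in> S"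
    show "z2 (c * g w)"
    proof (cases "g w = 0")
      case True then show ?thesis by (simp add: z2_int[of 0, simplified])
    next
      case False
      then have w: "w \<in> ?S" using \<open>w \<in> S\<close> by auto
      have le: "I wm + J w \<le> I w + J wm" using wm(2)[OF w] unfolding e_def by linarith
      have "c * g w = 2 ^ (I w + J wm) * of_int (A w) / (2 ^ (I wm + J w) * of_int (B w))"
        using IJ[OF w] by (simp add: c_def power_add field_simps)
      also have "\<dots> = 2 ^ (I w + J wm - (I wm + J w)) * of_int (A w) / of_int (B w)"
        using le odd_nz[of "B w"] IJ[OF w] by (simp add: power_diff field_simps)
      finally show ?thesis using IJ[OF w] z2_pow2_unit by simp
    qed
  qed
  moreover have "\<not> ev2 (c * g wm)"
  proof -
    have "c * g wm = of_int (A wm) / of_int (B wm)"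
      using IJ[OF wm(1)] by (simp add: c_def field_simps)
    then show ?thesis using IJ[OF wm(1)] unit_of_odd by simp
  qed
  ultimately show ?thesis using wm(1) by blast
qed



lemma blk_T[simp]: "blk True = [X0, X0, X1]" and blk_F[simp]: "blk False = [X0, X1]"
  by (simp_all add: blk_def)

lemma concat_rep_False: "concat (map blk (replicate k False)) = pw k"
  by (induction k) auto

lemma count_rep_False: "count_list (replicate k False) True = 0"
  by (induction k) auto

lemma level_decomp:
  assumes "has_level l w" "l \<ge> 1"
  shows "\<exists>M v. w = pw M @ X0 # X0 # X1 # v \<and> has_level (l - 1) v"
proof -
  obtain bs where bs: "w = concat (map blk bs)" "count_list bs True = l"
    using assms(1) unfolding has_level_def by blast
  have "True \<in> set bs" using bs(2) assms(2) count_list_0_iff[of bs True] by auto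
  then obtain ys zs where yz: "bs = ys @ True # zs" "True \<notin> set ys"
    using split_list_first by metis
  have "\<forall>y\<in>set ys. y = False" using yz(2) by auto
  then have ys: "ys = replicate (length ys) False"
    using replicate_length_same by metis
  define k where "k = length ys"
  have bs2: "bs = replicate k False @ True # zs" using yz(1) ys k_def by metis
  have w: "w = pw k @ X0 # X0 # X1 # concat (map blk zs)"
    using bs(1) bs2 concat_rep_False by simp
  have "count_list zs True = l - 1"
    using bs(2) bs2 count_rep_False by simp
  then show ?thesis using w unfolding has_level_def by blast
qed

lemma level_compose:
  assumes "has_level (l - 1) v" "l \<ge> 1"
  shows "has_level l (pw M @ X0 # X0 # X1 # v)"
proof -
  obtain bs where bs: "v = concat (map blk bs)" "count_list bs True = l - 1"
    using assms(1) unfolding has_level_def by blast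
  have "pw M @ X0 # X0 # X1 # v = concat (map blk (replicate M False @ True # bs))"
    using bs(1) concat_rep_False by simp
  moreover have "count_list (replicate M False @ True # bs) True = l"
    using bs(2) assms(2) count_rep_False by simp
  ultimately show ?thesis unfolding has_level_def by blast
qed

definition a0 :: "word \<Rightarrow> nat" where
  "a0 w = (THE a. \<exists>x. w = pw a @ X0 # X0 # X1 # x)"

lemma a0_eq[simp]: "a0 (pw a @ X0 # X0 # X1 # x) = a"
  unfolding a0_def by (rule the_equality) (auto dest: pw_001_inj)

definition good :: "word \<Rightarrow> bool" where
  "good w \<longleftrightarrow> (w \<noteq> [] \<longrightarrow> w ! 0 = X0) \<and> (\<forall>i. Suc i < length w \<longrightarrow> w ! i = X1 \<longrightarrow> w ! Suc i = X0)"

lemma good_Nil: "good []" by (simp add: good_def)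

lemma good_X0: assumes "good w" shows "good (X0 # w)"
  unfolding good_def
proof (intro conjI allI impI)
  fix i assume "Suc i < length (X0 # w)" "(X0 # w) ! i = X1"
  then show "(X0 # w) ! Suc i = X0" using assms unfolding good_def
    by (cases i) auto
qed simp

lemma good_X0X1: assumes "good w" shows "good (X0 # X1 # w)"
  unfolding good_def
proof (intro conjI allI impI)
  fix i assume a: "Suc i < length (X0 # X1 # w)" "(X0 # X1 # w) ! i = X1"
  show "(X0 # X1 # w) ! Suc i = X0"
  proof (cases i)
    case 0 then show ?thesis using a by simp
  next
    case (Suc k)
    show ?thesis
    proof (cases k)
      case 0 then show ?thesis using a Suc assms unfolding good_def by (cases w) auto
    next
      case (Suc k')
      then show ?thesis using a \<open>i = Suc k\<close> assms unfolding good_def by auto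
    qed
  qed
qed simp

lemma good_concat: "good (concat (map blk bs))"
proof (induction bs)
  case Nil then show ?case by (simp add: good_Nil)
next
  case (Cons b bs)
  then show ?case by (cases b) (auto intro: good_X0 good_X0X1)
qed

lemma good_level: "has_level l w \<Longrightarrow> good w"
  unfolding has_level_def using good_concat by blast

lemma goodD: "good w \<Longrightarrow> Suc i < length w \<Longrightarrow> w ! i = X1 \<Longrightarrow> w ! Suc i = X0"
  unfolding good_def by blast

lemma goodD0: "good w \<Longrightarrow> w \<noteq> [] \<Longrightarrow> w ! 0 = X0"
  unfolding good_def by blast

lemma eps_0[simp]: "eps w 0 = X1" by (simp add: eps_def)
lemma eps_in: "0 < k \<Longrightarrow> k \<le> length w \<Longrightarrow> eps w k = w ! (k - 1)" by (simp add: eps_def)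
lemma eps_out: "length w < k \<Longrightarrow> eps w k = X0" by (simp add: eps_def)

lemma pow2_split: assumes "r \<ge> 1" shows "(2::rat) ^ (2 * r) = 2 * 2 ^ (2 * r - 1)"
proof -
  have e: "2 * r = Suc (2 * r - 1)" using assms by simp
  have F: "(2::rat) ^ (Suc (2 * r - 1)) = 2 * 2 ^ (2 * r - 1)" by (rule power_Suc)
  from F show ?thesis by (simp only: e[symmetric])
qed

definition sc :: "nat \<Rightarrow> rat" where "sc r = 2 ^ (2 * r) / (4 * of_nat r)"

lemma nat_2adic: "n > (0::nat) \<Longrightarrow> \<exists>k o'. odd o' \<and> n = 2 ^ k * o'"
proof (induction n rule: less_induct)
  case (less n)
  show ?case
  proof (cases "odd n")
    case True then show ?thesis by (intro exI[of _ 0] exI[of _ n]) simp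
  next
    case False
    then obtain m where m: "n = 2 * m" by blast
    with less.prems have "m > 0" by auto
    have "m < n" using m \<open>m > 0\<close> by auto
    from less.IH[OF this \<open>m > 0\<close>] obtain k o' where "odd o'" "m = 2 ^ k * o'" by blast
    then show ?thesis using m by (intro exI[of _ "Suc k"] exI[of _ o']) auto
  qed
qed

lemma ev2_pow_div: assumes "r \<ge> 1" shows "ev2 (2 ^ (2 * r - 1) / of_nat r)"
proof -
  have "r > 0" using assms by simp
  then obtain k o' where ko: "odd o'" "r = 2 ^ k * o'" using nat_2adic by blast
  have "o' \<ge> 1" using ko(1) by (cases o') auto
  then have "2 ^ k \<le> r" using ko(2) by (metis mult.right_neutral mult_le_mono2)
  moreover have "r < 2 ^ r" by (rule less_exp)
  ultimately have "(2::nat) ^ k < 2 ^ r" by linarith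
  then have "k < r" by (simp add: power_strict_increasing_iff)
  then have e: "2 * r - 1 = Suc (2 * r - 2 - k) + k" by linarith
  have "(2 ^ (2 * r - 1) / of_nat r :: rat) = of_int (2 ^ Suc (2 * r - 2 - k)) / of_int (int o')"
    by (subst e, simp only: power_add ko(2)) (simp add: field_simps)
  moreover have "odd (int o')" "even (2 ^ Suc (2 * r - 2 - k) :: int)" using ko(1) by auto
  ultimately show ?thesis unfolding ev2_def by blast
qed

lemma binom_absorb_rat:
  "(of_nat (2 * a + 1) :: rat) * of_nat ((2 * r) choose (2 * a + 1)) = of_nat (2 * r) * of_nat ((2 * r - 1) choose (2 * a))"
proof -
  have "Suc (2 * a) * ((2 * r) choose Suc (2 * a)) = (2 * r) * ((2 * r - 1) choose (2 * a))"
    by (rule binomial_absorption)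
  then show ?thesis by (metis Suc_eq_plus1 of_nat_mult)
qed

lemma sc_cc:
  assumes "r = a + b + 1"
  shows "sc r * cc r a b = (-1) ^ r * (2 ^ (2 * r - 1) / of_nat r * of_nat ((2 * r) choose (2 * b + 2))
          - (2 ^ (2 * r) - 1) * (of_nat ((2 * r - 1) choose (2 * a)) / of_nat (2 * a + 1)))"
proof -
  define C2 where "C2 = (of_nat ((2 * r) choose (2 * a + 1)) :: rat)"
  define C3 where "C3 = (of_nat ((2 * r - 1) choose (2 * a)) :: rat)"
  define C1 where "C1 = (of_nat ((2 * r) choose (2 * b + 2)) :: rat)"
  define X where "X = (2 :: rat) ^ (2 * r - 1)"
  define P where "P = (2 :: rat) ^ (2 * r)"
  have rp: "(of_nat r :: rat) \<noteq> 0" using assms by simp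
  have ap: "(of_nat (2 * a + 1) :: rat) \<noteq> 0" by (simp del: of_nat_add)
  have Pn: "P \<noteq> 0" unfolding P_def by simp
  have h3: "C2 / (2 * of_nat r) = C3 / of_nat (2 * a + 1)"
  proof -
    have "of_nat (2 * a + 1) * C2 = 2 * of_nat r * C3"
      using binom_absorb_rat[of a r] unfolding C2_def C3_def by simp
    then show ?thesis using rp ap by (simp add: field_simps)
  qed
  have PX: "P = 2 * X" unfolding P_def X_def using pow2_split[of r] assms by simp
  have h1: "sc r * cc r a b = (-1) ^ r * (P * C1 / (2 * of_nat r) - (P - 1) * (C2 / (2 * of_nat r)))"
    unfolding sc_def cc_def C1_def C2_def P_def[symmetric] using rp Pn
    by (simp add: field_simps)
  have h2: "P * C1 / (2 * of_nat r) = X / of_nat r * C1"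
    unfolding PX using rp by (simp add: field_simps)
  show ?thesis unfolding h1 h2 h3 unfolding X_def C1_def C3_def P_def by simp
qed

lemma ev2_sign: "ev2 ((-1) ^ n * x) \<longleftrightarrow> ev2 x"
proof
  assume "ev2 ((-1) ^ n * x)"
  then have "ev2 ((-1) ^ n * x * (-1) ^ n)"
    by (rule ev2_mult) (simp add: z2_pow z2_uminus z2_int[of 1, simplified])
  then show "ev2 x" by (simp add: mult.commute[of _ x] mult.assoc flip: power_mult_distrib)
next
  assume "ev2 x" then show "ev2 ((-1) ^ n * x)"
    by (rule ev2_mult2[rotated]) (simp add: z2_pow z2_uminus z2_int[of 1, simplified])
qed

lemma z2_0[simp]: "z2 0" using z2_int[of 0] by simp

lemma z2_sign: "z2 x \<Longrightarrow> z2 ((-1) ^ n * x)"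
  by (rule z2_mult) (simp_all add: z2_pow z2_uminus z2_int[of 1, simplified])

lemma z2_odd_frac: "odd (b::int) \<Longrightarrow> z2 (of_int a / of_int b)"
  unfolding z2_def by blast

lemma z2_sc_cc: assumes "r = a + b + 1" shows "z2 (sc r * cc r a b)"
proof -
  have "r \<ge> 1" using assms by simp
  have e: "ev2 (2 ^ (2 * r - 1) / of_nat r)" using ev2_pow_div[OF \<open>r \<ge> 1\<close>] .
  have t2: "(2 ^ (2 * r) - 1) * (of_nat ((2 * r - 1) choose (2 * a)) / of_nat (2 * a + 1))
      = (of_int ((2 ^ (2 * r) - 1) * int ((2 * r - 1) choose (2 * a))) / of_int (int (2 * a + 1)) :: rat)"
    by simp
  have "z2 (2 ^ (2 * r - 1) / of_nat r * of_nat ((2 * r) choose (2 * b + 2))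
          - (2 ^ (2 * r) - 1) * (of_nat ((2 * r - 1) choose (2 * a)) / of_nat (2 * a + 1)))"
    unfolding t2 by (intro z2_diff z2_mult ev2_imp_z2[OF e] z2_nat z2_odd_frac) (simp del: of_nat_add)
  then show ?thesis unfolding sc_cc[OF assms] by (rule z2_sign)
qed

lemma unit_sc_cc: "\<not> ev2 (sc (M + 1) * cc (M + 1) M 0)"
proof -
  let ?r = "M + 1"
  define E where "E = (2 ^ (2 * ?r - 1) / of_nat ?r * of_nat ((2 * ?r) choose (2 * 0 + 2)) :: rat)"
  have e: "ev2 E" unfolding E_def
    by (rule ev2_mult[OF ev2_pow_div]) (simp, rule z2_nat)
  have b: "(2 * ?r - 1) choose (2 * M) = 2 * M + 1"
    using binomial_Suc_n[of "2 * M"] by simp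
  have nz: "(of_nat (2 * M + 1) :: rat) \<noteq> 0" by (simp del: of_nat_add)
  have u: "(2 ^ (2 * ?r) - 1) * (of_nat ((2 * ?r - 1) choose (2 * M)) / of_nat (2 * M + 1))
      = (of_int (2 ^ (2 * ?r) - 1) :: rat)"
    unfolding b using nz by simp
  have eq: "sc ?r * cc ?r M 0 = (-1) ^ ?r * (E - of_int (2 ^ (2 * ?r) - 1))"
    using sc_cc[of ?r M 0] u unfolding E_def by simp
  have od: "odd (2 ^ (2 * ?r) - 1 :: int)" by simp
  have nu: "\<not> ev2 (- of_int (2 ^ (2 * ?r) - 1))"
  proof
    assume "ev2 (- of_int (2 ^ (2 * ?r) - 1))"
    then have "ev2 (- (- of_int (2 ^ (2 * ?r) - 1)))" by (rule ev2_uminus)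
    then have "ev2 (of_int (2 ^ (2 * ?r) - 1))" by (simp only: minus_minus)
    then show False using not_ev2_odd_int[OF od] by blast
  qed
  have "\<not> ev2 (- of_int (2 ^ (2 * ?r) - 1) + E)"
    by (rule nonunit_add[OF nu e])
  moreover have "E - of_int (2 ^ (2 * ?r) - 1) = - of_int (2 ^ (2 * ?r) - 1) + E" by (rule diff_conv_add_uminus[THEN trans, OF add.commute])
  ultimately have "\<not> ev2 (E - of_int (2 ^ (2 * ?r) - 1))" by (simp only: not_False_eq_True)
  then show ?thesis unfolding eq ev2_sign .
qed

lemma binom_pair: assumes "n = 2 * a + 2 * b + 1"
  shows "(n choose (2 * a)) * (2 * b + 1) = (n choose (2 * b)) * (2 * a + 1)"
proof -
  have s: "n choose (2 * b) = n choose (2 * a + 1)"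
    using binomial_symmetric[of "2 * b" n] assms by (simp add: algebra_simps)
  have A: "(2 * a + 1) * (n choose (2 * a + 1)) = n * ((n - 1) choose (2 * a))"
    using binomial_absorption[of "2 * a" n] by simp
  have B0: "(n - 2 * a) * (n choose (2 * a)) = n * ((n - 1) choose (2 * a))"
    by (rule binomial_absorb_comp)
  have "n - 2 * a = 2 * b + 1" using assms by simp
  then have B: "(2 * b + 1) * (n choose (2 * a)) = n * ((n - 1) choose (2 * a))" using B0 by simp
  show ?thesis using A B s by (metis mult.commute)
qed

lemma pair_sc_cc: assumes "r = a + b + 1"
  shows "ev2 (sc r * cc r a b - sc r * cc r b a)"
proof -
  have r': "r = b + a + 1" using assms by simp
  have bp: "((2 * r - 1) choose (2 * a)) * (2 * b + 1) = ((2 * r - 1) choose (2 * b)) * (2 * a + 1)"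
    by (rule binom_pair) (use assms in simp)
  have eqq: "(of_nat ((2 * r - 1) choose (2 * a)) / of_nat (2 * a + 1) :: rat)
      = of_nat ((2 * r - 1) choose (2 * b)) / of_nat (2 * b + 1)"
  proof -
    have "(of_nat ((2 * r - 1) choose (2 * a)) * of_nat (2 * b + 1) :: rat)
        = of_nat ((2 * r - 1) choose (2 * b)) * of_nat (2 * a + 1)"
      using bp by (metis of_nat_mult)
    moreover have "(of_nat (2 * a + 1) :: rat) \<noteq> 0" "(of_nat (2 * b + 1) :: rat) \<noteq> 0"
      by (simp_all del: of_nat_add)
    ultimately show ?thesis by (simp add: frac_eq_eq)
  qed
  define T where "T = (2 ^ (2 * r) - 1) * (of_nat ((2 * r - 1) choose (2 * b)) / of_nat (2 * b + 1) :: rat)"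
  define X where "X = (2 ^ (2 * r - 1) / of_nat r :: rat)"
  have "sc r * cc r a b - sc r * cc r b a = (-1) ^ r * (X * of_nat ((2 * r) choose (2 * b + 2)) - T)
      - (-1) ^ r * (X * of_nat ((2 * r) choose (2 * a + 2)) - T)"
    unfolding sc_cc[OF assms] sc_cc[OF r'] eqq T_def X_def ..
  also have "\<dots> = (-1) ^ r * (X * (of_nat ((2 * r) choose (2 * b + 2)) - of_nat ((2 * r) choose (2 * a + 2))))"
    by (simp add: algebra_simps)
  finally have eq: "sc r * cc r a b - sc r * cc r b a = (-1) ^ r * (X * (of_nat ((2 * r) choose (2 * b + 2)) - of_nat ((2 * r) choose (2 * a + 2))))" .
  have "ev2 (X * (of_nat ((2 * r) choose (2 * b + 2)) - of_nat ((2 * r) choose (2 * a + 2))))"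
    unfolding X_def by (rule ev2_mult[OF ev2_pow_div]) (use assms in simp, rule z2_diff[OF z2_nat z2_nat])
  then show ?thesis unfolding eq ev2_sign .
qed

lemma phi_sc:
  assumes "length u = 2 * r + 1" "r \<ge> 1"
  shows "z2 (sc r * phi_word u) \<and> (\<not> ev2 (sc r * phi_word u) \<longrightarrow> (\<exists>a b. a + b + 1 = r \<and> u = pw a @ [X0, X0, X1] @ pw b))"
proof (cases "\<exists>a b. u = pw a @ [X0, X0, X1] @ pw b")
  case True
  then obtain a b where u: "u = pw a @ [X0, X0, X1] @ pw b" by blast
  then have r: "r = a + b + 1" using assms(1) by simp
  show ?thesis using u r phi_word_cc z2_sc_cc by auto
next
  case False
  note F = this
  show ?thesis
  proof (cases "\<exists>n. u = pw n @ [X0]")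
    case True
    then obtain n where u: "u = pw n @ [X0]" by blast
    then have "n = r" using assms(1) by simp
    have "sc r * phi_word u = (-1) ^ n * (2 ^ (2 * r - 1) / of_nat r)"
    proof -
      have "(2::rat) ^ (2 * r) = 2 * 2 ^ (2 * r - 1)"
        using pow2_split[OF assms(2)] .
      then show ?thesis unfolding u phi_word_pw0 sc_def using assms(2) by (simp add: field_simps)
    qed
    moreover have "ev2 ((-1) ^ n * (2 ^ (2 * r - 1) / of_nat r))"
      by (subst ev2_sign) (rule ev2_pow_div[OF assms(2)])
    ultimately show ?thesis using ev2_imp_z2 by simp
  next
    case False
    then show ?thesis using F phi_word_other by simp
  qed
qed



definition kap :: "letter \<Rightarrow> letter \<Rightarrow> word \<Rightarrow> rat" where
  "kap a b s = (if a = X1 \<and> b = X0 then 1 else if a = X0 \<and> b = X1 then (-1) ^ length s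
      else if s = [] then 1 else 0)"
definition mu :: "letter \<Rightarrow> letter \<Rightarrow> word \<Rightarrow> word" where
  "mu a b s = (if a = X1 \<and> b = X0 then s else if a = X0 \<and> b = X1 then rev s else [])"

lemma Ifun_eq: "Ifun a s b = monom (kap a b s) (mu a b s)"
  unfolding Ifun_def kap_def mu_def antipode_def by auto

definition seg :: "word \<Rightarrow> nat \<Rightarrow> nat \<Rightarrow> word" where
  "seg w r j = take (2 * r + 1) (drop j w)"
definition rem :: "word \<Rightarrow> nat \<Rightarrow> nat \<Rightarrow> word" where
  "rem w r j = take j w @ drop (j + 2 * r + 1) w"
definition tt :: "word \<Rightarrow> nat \<Rightarrow> nat \<Rightarrow> rat" where
  "tt w r j = sc r * (kap (eps w j) (eps w (j + 2 * r + 2)) (seg w r j)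
       * phi_word (mu (eps w j) (eps w (j + 2 * r + 2)) (seg w r j)))"
definition Jv :: "word \<Rightarrow> nat \<Rightarrow> word \<Rightarrow> nat set" where
  "Jv w r v = {j. j + 2 * r + 1 \<le> length w \<and> rem w r j = v}"

lemma finite_Jv: "finite (Jv w r v)"
  by (rule finite_subset[of _ "{..length w}"]) (auto simp: Jv_def)

lemma dphi_eval:
  assumes "1 \<le> r" "2 * r + 1 \<le> N" "has_level (l - 1) v"
  shows "sc r * dphi N l w (r, v) = sum (tt w r) (Jv w r v)"
proof -
  define J where "J = {j. j + 2 * r + 1 \<le> length w}"
  have finJ: "finite J" unfolding J_def by (rule finite_subset[of _ "{..length w}"]) auto
  define K where "K j = kap (eps w j) (eps w (j + 2 * r + 2)) (take (2 * r + 1) (drop j w))" for j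
  define U where "U j = mu (eps w j) (eps w (j + 2 * r + 2)) (take (2 * r + 1) (drop j w))" for j
  define c where "c j = (if v = rem w r j then 1 else (0::rat))" for j
  have T: "\<And>u. partial_l l r w (u, v) = (\<Sum>j\<in>J. (if u = U j then K j else 0) * c j)"
    unfolding partial_l_def partial_def tensor_def J_def K_def U_def c_def
    using assms(3) by (simp add: Ifun_eq monom_def rem_def cong: if_cong)
  let ?T = "\<lambda>u. partial_l l r w (u, v)"
  have "dphi N l w (r, v) = phi_tensor (partial_l l r w) v"
    unfolding dphi_def using assms by simp
  also have "\<dots> = (\<Sum>u | ?T u \<noteq> 0. phi_word u * ?T u)" unfolding phi_tensor_def ..
  also have "\<dots> = (\<Sum>u \<in> U ` J. phi_word u * ?T u)"
  proof (rule sum.mono_neutral_left)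
    show "finite (U ` J)" using finJ by simp
    show "{u. ?T u \<noteq> 0} \<subseteq> U ` J"
    proof
      fix u assume "u \<in> {u. ?T u \<noteq> 0}"
      then have "(\<Sum>j\<in>J. (if u = U j then K j else 0) * c j) \<noteq> 0" using T by simp
      then obtain j where "j \<in> J" "(if u = U j then K j else 0) * c j \<noteq> 0"
        by (rule sum.not_neutral_contains_not_neutral)
      then show "u \<in> U ` J" by (auto split: if_splits)
    qed
    show "\<forall>i\<in>U ` J - {u. ?T u \<noteq> 0}. phi_word i * ?T i = 0" by simp
  qed
  also have "\<dots> = (\<Sum>u \<in> U ` J. \<Sum>j\<in>J. phi_word u * ((if u = U j then K j else 0) * c j))"
    by (simp add: T sum_distrib_left)
  also have "\<dots> = (\<Sum>j\<in>J. \<Sum>u \<in> U ` J. phi_word u * ((if u = U j then K j else 0) * c j))"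
    by (rule sum.swap)
  also have "\<dots> = (\<Sum>j\<in>J. phi_word (U j) * K j * c j)"
  proof (rule sum.cong[OF refl])
    fix j assume j: "j \<in> J"
    have "(\<Sum>u \<in> U ` J. phi_word u * ((if u = U j then K j else 0) * c j))
        = (\<Sum>u \<in> U ` J. if u = U j then phi_word (U j) * K j * c j else 0)"
      by (rule sum.cong) auto
    also have "\<dots> = phi_word (U j) * K j * c j"
      using finJ j by (simp add: sum.delta)
    finally show "(\<Sum>u \<in> U ` J. phi_word u * ((if u = U j then K j else 0) * c j)) = phi_word (U j) * K j * c j" .
  qed
  also have "\<dots> = (\<Sum>j\<in>J. if rem w r j = v then phi_word (U j) * K j else 0)"
    unfolding c_def by (rule sum.cong) auto
  also have "\<dots> = (\<Sum>j\<in>{j\<in>J. rem w r j = v}. phi_word (U j) * K j)"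
    using finJ by (simp add: sum.inter_filter)
  finally have "dphi N l w (r, v) = (\<Sum>j\<in>Jv w r v. phi_word (U j) * K j)"
    unfolding Jv_def J_def by simp
  then show ?thesis unfolding tt_def K_def U_def seg_def by (simp add: sum_distrib_left mult.commute)
qed

lemma concat_rep_comm: "xs @ concat (replicate n xs) = concat (replicate n xs) @ xs"
proof -
  have "xs @ concat (replicate n xs) = concat (replicate (Suc n) xs)" by simp
  also have "\<dots> = concat (replicate n xs @ [xs])" by (simp add: replicate_append_same)
  finally show ?thesis by simp
qed

lemma rev_pw: "rev (pw n) = concat (replicate n [X1, X0])"
proof (induction n)
  case 0 then show ?case by simp
next
  case (Suc n)
  have "rev (pw (Suc n)) = concat (replicate n [X1, X0]) @ [X1, X0]" using Suc by simp
  also have "\<dots> = [X1, X0] @ concat (replicate n [X1, X0])" using concat_rep_comm by metis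
  finally show ?case by simp
qed

lemma X1_pw: "X1 # pw n = rev (pw n) @ [X1]"
proof (induction n)
  case 0 then show ?case by simp
next
  case (Suc n)
  have "X1 # pw (Suc n) = X1 # X0 # (rev (pw n) @ [X1])" using Suc by simp
  also have "\<dots> = ([X1, X0] @ concat (replicate n [X1, X0])) @ [X1]" by (simp add: rev_pw)
  also have "\<dots> = (concat (replicate n [X1, X0]) @ [X1, X0]) @ [X1]" using concat_rep_comm by metis
  also have "\<dots> = rev (pw (Suc n)) @ [X1]" by (simp add: rev_pw)
  finally show ?case .
qed

lemma ident1: "X1 # pw a @ X0 # X0 # X1 # pw b = rev (pw b @ X0 # X0 # X1 # pw a) @ [X1]"
proof -
  have "X1 # pw a @ X0 # X0 # X1 # pw b = (X1 # pw a) @ X0 # X0 # (X1 # pw b)" by simp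
  also have "\<dots> = (rev (pw a) @ [X1]) @ X0 # X0 # (rev (pw b) @ [X1])" by (simp only: X1_pw)
  also have "\<dots> = rev (pw b @ X0 # X0 # X1 # pw a) @ [X1]" by simp
  finally show ?thesis .
qed

lemma seg_len: "j + 2 * r + 1 \<le> length w \<Longrightarrow> length (seg w r j) = 2 * r + 1"
  by (simp add: seg_def)

lemma drop_split: "j + 2 * r + 1 \<le> length w \<Longrightarrow> drop j w = seg w r j @ drop (j + 2 * r + 1) w"
proof -
  have "drop j w = take (2 * r + 1) (drop j w) @ drop (2 * r + 1) (drop j w)"
    by (rule append_take_drop_id[symmetric])
  moreover have "drop (2 * r + 1) (drop j w) = drop (j + 2 * r + 1) w"
  proof -
    have e: "j + 2 * r + 1 = 2 * r + 1 + j" by simp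
    show ?thesis by (simp only: e drop_drop)
  qed
  ultimately show "drop j w = seg w r j @ drop (j + 2 * r + 1) w" unfolding seg_def by simp
qed

lemma take_exact: "length xs = n \<Longrightarrow> take n (xs @ ys) = xs" by simp

lemma letter_cases: "x \<noteq> X1 \<Longrightarrow> x = X0" by (cases x) auto

lemma shiftL:
  assumes g: "good w" and j1: "1 \<le> j" and jl: "j + 2 * r + 1 \<le> length w"
    and e1: "eps w j = X1" and sg: "seg w r j = pw a @ [X0, X0, X1] @ pw b"
  shows "eps w (j - 1) = X0 \<and> eps w (j - 1 + 2 * r + 2) = X1
     \<and> seg w r (j - 1) = rev (pw b @ [X0, X0, X1] @ pw a) \<and> rem w r (j - 1) = rem w r j
     \<and> j - 1 + 2 * r + 1 \<le> length w \<and> j - 1 \<noteq> 0"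
proof -
  have wj: "w ! (j - 1) = X1" using e1 eps_in[of j w] j1 jl by simp
  have dj: "drop (j - 1) w = X1 # drop j w"
    using Cons_nth_drop_Suc[of "j - 1" w] j1 jl wj by simp
  have ds: "drop j w = pw a @ [X0, X0, X1] @ pw b @ drop (j + 2 * r + 1) w"
    using drop_split[OF jl] sg by simp
  have D: "drop (j - 1) w = rev (pw b @ [X0, X0, X1] @ pw a) @ X1 # drop (j + 2 * r + 1) w"
    using dj ds ident1[of a b] by simp
  have len: "length (rev (pw b @ [X0, X0, X1] @ pw a)) = 2 * r + 1"
    using seg_len[OF jl] sg by simp
  have s1: "seg w r (j - 1) = rev (pw b @ [X0, X0, X1] @ pw a)"
    unfolding seg_def D by (rule take_exact[OF len])
  have "w ! (j + 2 * r) = drop (j - 1) w ! (2 * r + 1)"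
    using nth_drop[of "j - 1" w "2 * r + 1"] j1 jl by simp
  also have "\<dots> = X1" unfolding D using len nth_append_length by metis
  finally have wl: "w ! (j + 2 * r) = X1" .
  have e2: "eps w (j - 1 + 2 * r + 2) = X1"
    using eps_in[of "j - 1 + 2 * r + 2" w] j1 jl wl by simp
  have j2: "j \<noteq> 1"
  proof
    assume "j = 1"
    then have "w ! 0 = X1" using wj by simp
    moreover have "w \<noteq> []" using jl by auto
    then have "w ! 0 = X0" using goodD0[OF g] by blast
    ultimately show False by simp
  qed
  have "w ! (j - 2) \<noteq> X1"
  proof
    assume "w ! (j - 2) = X1"
    then have "w ! Suc (j - 2) = X0" using goodD[OF g, of "j - 2"] j1 j2 jl by simp
    moreover have "Suc (j - 2) = j - 1" using j1 j2 by simp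
    ultimately show False using wj by simp
  qed
  then have x0: "w ! (j - 2) = X0" by (rule letter_cases)
  have "eps w (j - 1) = w ! (j - 1 - 1)" using eps_in[of "j - 1" w] j1 j2 jl by simp
  moreover have "j - 1 - 1 = j - 2" by simp
  ultimately have e0: "eps w (j - 1) = X0" using x0 by metis
  have dr: "drop (j + 2 * r) w = X1 # drop (j + 2 * r + 1) w"
    using Cons_nth_drop_Suc[of "j + 2 * r" w] jl wl by simp
  have tk: "take j w = take (j - 1) w @ [X1]"
    using take_Suc_conv_app_nth[of "j - 1" w] j1 jl wj by simp
  have "rem w r (j - 1) = rem w r j"
    unfolding rem_def using dr tk j1 by simp
  then show ?thesis using e0 e2 s1 jl j1 j2 by simp
qed

lemma shiftR:
  assumes g: "good w" and jl: "j + 2 * r + 1 \<le> length w"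
    and e0: "eps w j = X0" and e1: "eps w (j + 2 * r + 2) = X1"
    and sg: "rev (seg w r j) = pw a @ [X0, X0, X1] @ pw b"
  shows "j + 1 + 2 * r + 1 \<le> length w \<and> eps w (j + 1) = X1 \<and> eps w (j + 1 + 2 * r + 2) = X0
     \<and> seg w r (j + 1) = pw b @ [X0, X0, X1] @ pw a \<and> rem w r (j + 1) = rem w r j"
proof -
  have l2: "j + 2 * r + 2 \<le> length w"
  proof (rule ccontr)
    assume "\<not> ?thesis"
    then have "eps w (j + 2 * r + 2) = X0" by (simp add: eps_out)
    then show False using e1 by simp
  qed
  have wx: "w ! (j + 2 * r + 1) = X1" using e1 eps_in[of "j + 2 * r + 2" w] l2 by simp
  have seg_eq: "seg w r j = rev (pw a @ [X0, X0, X1] @ pw b)"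
    using sg by (metis rev_rev_ident)
  have dr: "drop (j + 2 * r + 1) w = X1 # drop (j + 2 * r + 2) w"
    using Cons_nth_drop_Suc[of "j + 2 * r + 1" w] l2 wx by simp
  have "drop j w = rev (pw a @ [X0, X0, X1] @ pw b) @ X1 # drop (j + 2 * r + 2) w"
    using drop_split[OF jl] seg_eq dr by simp
  also have "\<dots> = (X1 # pw b @ X0 # X0 # X1 # pw a) @ drop (j + 2 * r + 2) w"
    using ident1[of b a] by simp
  finally have dj: "drop j w = X1 # pw b @ X0 # X0 # X1 # pw a @ drop (j + 2 * r + 2) w" by simp
  have dj1: "drop (j + 1) w = (pw b @ [X0, X0, X1] @ pw a) @ drop (j + 2 * r + 2) w"
  proof -
    have "drop (j + 1) w = drop 1 (drop j w)" by (simp add: algebra_simps)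
    then show ?thesis using dj by simp
  qed
  have len: "length (pw b @ [X0, X0, X1] @ pw a) = 2 * r + 1"
    using seg_len[OF jl] seg_eq by simp
  have s1: "seg w r (j + 1) = pw b @ [X0, X0, X1] @ pw a"
    unfolding seg_def dj1 by (rule take_exact[OF len])
  have wj: "w ! j = X1"
    using nth_drop[of j w 0] jl dj by simp
  have ej: "eps w (j + 1) = X1" using eps_in[of "j + 1" w] jl wj by simp
  have e3: "eps w (j + 1 + 2 * r + 2) = X0"
  proof (cases "j + 1 + 2 * r + 2 \<le> length w")
    case True
    then have "w ! Suc (j + 2 * r + 1) = X0" using goodD[OF g, of "j + 2 * r + 1"] wx by simp
    then show ?thesis using eps_in[of "j + 1 + 2 * r + 2" w] True by simp
  next
    case False then show ?thesis by (simp add: eps_out)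
  qed
  have tk: "take (j + 1) w = take j w @ [X1]"
    using take_Suc_conv_app_nth[of j w] jl wj by simp
  have "rem w r (j + 1) = rem w r j"
    unfolding rem_def using dr tk by simp
  then show ?thesis using ej e3 s1 l2 by simp
qed

lemma tt_10:
  assumes "eps w j = X1" "eps w (j + 2 * r + 2) = X0" "seg w r j = pw a @ [X0, X0, X1] @ pw b"
  shows "tt w r j = sc r * cc (a + b + 1) a b"
  unfolding tt_def kap_def mu_def using assms phi_word_cc by simp

lemma tt_01:
  assumes "eps w j = X0" "eps w (j + 2 * r + 2) = X1" "length (seg w r j) = 2 * r + 1"
    "rev (seg w r j) = pw a @ [X0, X0, X1] @ pw b"
  shows "tt w r j = - (sc r * cc (a + b + 1) a b)"
proof -
  have "kap (eps w j) (eps w (j + 2 * r + 2)) (seg w r j) = -1"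
    unfolding kap_def using assms by simp
  moreover have "mu (eps w j) (eps w (j + 2 * r + 2)) (seg w r j) = pw a @ [X0, X0, X1] @ pw b"
    unfolding mu_def using assms by simp
  ultimately show ?thesis unfolding tt_def using phi_word_cc by simp
qed

lemma tt_cases:
  assumes "r \<ge> 1" "j + 2 * r + 1 \<le> length w"
  shows "z2 (tt w r j) \<and> (\<not> ev2 (tt w r j) \<longrightarrow>
     (eps w j = X1 \<and> eps w (j + 2 * r + 2) = X0 \<and> (\<exists>a b. seg w r j = pw a @ [X0, X0, X1] @ pw b)) \<or>
     (eps w j = X0 \<and> eps w (j + 2 * r + 2) = X1 \<and> (\<exists>a b. rev (seg w r j) = pw a @ [X0, X0, X1] @ pw b)))"
proof -
  have len: "length (seg w r j) = 2 * r + 1" using seg_len[OF assms(2)] .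
  have ne: "seg w r j \<noteq> []" using len by auto
  consider "eps w j = X1 \<and> eps w (j + 2 * r + 2) = X0" | "eps w j = X0 \<and> eps w (j + 2 * r + 2) = X1"
    | "\<not> (eps w j = X1 \<and> eps w (j + 2 * r + 2) = X0) \<and> \<not> (eps w j = X0 \<and> eps w (j + 2 * r + 2) = X1)"
    by blast
  then show ?thesis
  proof cases
    case 1
    then have t: "tt w r j = sc r * phi_word (seg w r j)" unfolding tt_def kap_def mu_def by simp
    show ?thesis using phi_sc[OF len assms(1)] 1 unfolding t by auto
  next
    case 2
    then have t: "tt w r j = - (sc r * phi_word (rev (seg w r j)))" unfolding tt_def kap_def mu_def
      using len by simp
    have len2: "length (rev (seg w r j)) = 2 * r + 1" using len by simp
    have z: "z2 (sc r * phi_word (rev (seg w r j)))" using phi_sc[OF len2 assms(1)] by blast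
    have "\<not> ev2 (tt w r j) \<Longrightarrow> \<not> ev2 (sc r * phi_word (rev (seg w r j)))"
      unfolding t using ev2_uminus by blast
    then show ?thesis using phi_sc[OF len2 assms(1)] 2 z z2_uminus unfolding t by auto
  next
    case 3
    then have "kap (eps w j) (eps w (j + 2 * r + 2)) (seg w r j) = 0"
      unfolding kap_def using ne by auto
    then have "tt w r j = 0" unfolding tt_def by simp
    then show ?thesis by simp
  qed
qed

lemma pair_ev2:
  assumes g: "good w" and r: "r \<ge> 1"
  shows "ev2 (sum (tt w r) (Jv w r v - {0}))"
proof -
  define P1 where "P1 = {j \<in> Jv w r v. j \<noteq> 0 \<and> eps w j = X1 \<and> eps w (j + 2 * r + 2) = X0
      \<and> (\<exists>a b. seg w r j = pw a @ [X0, X0, X1] @ pw b)}"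
  define P2 where "P2 = {j \<in> Jv w r v. eps w j = X0 \<and> eps w (j + 2 * r + 2) = X1
      \<and> (\<exists>a b. rev (seg w r j) = pw a @ [X0, X0, X1] @ pw b)}"
  define R where "R = Jv w r v - {0} - P1 - P2"
  have fin: "finite (Jv w r v)" by (rule finite_Jv)
  have P2sub: "P2 \<subseteq> Jv w r v - {0}" unfolding P2_def by auto
  have P1sub: "P1 \<subseteq> Jv w r v - {0}" unfolding P1_def by auto
  have split: "Jv w r v - {0} = (P1 \<union> P2) \<union> R" unfolding R_def using P1sub P2sub by blast
  have d1: "P1 \<inter> P2 = {}" unfolding P1_def P2_def by auto
  have fP1: "finite P1" "finite P2" "finite R"
    using fin P1sub P2sub unfolding R_def by (auto intro: finite_subset)
  have sum_split: "sum (tt w r) (Jv w r v - {0}) = sum (tt w r) P1 + sum (tt w r) P2 + sum (tt w r) R"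
    unfolding split
    by (subst sum.union_disjoint) (use fP1 d1 in \<open>auto simp: R_def sum.union_disjoint\<close>)
  have evR: "ev2 (sum (tt w r) R)"
  proof (rule ev2_sum)
    fix j assume "j \<in> R"
    then have j: "j \<in> Jv w r v" "j \<noteq> 0" "j \<notin> P1" "j \<notin> P2" unfolding R_def by auto
    then have jl: "j + 2 * r + 1 \<le> length w" unfolding Jv_def by simp
    show "ev2 (tt w r j)"
    proof (rule ccontr)
      assume "\<not> ev2 (tt w r j)"
      then show False using tt_cases[OF r jl] j unfolding P1_def P2_def by blast
    qed
  qed
  have bij: "bij_betw (\<lambda>j. j - 1) P1 P2"
  proof (rule bij_betw_byWitness[where f' = "\<lambda>j. j + 1"])
    show "\<forall>a\<in>P1. a - 1 + 1 = a" unfolding P1_def by auto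
    show "\<forall>a\<in>P2. a + 1 - 1 = a" by auto
    show "(\<lambda>j. j - 1) ` P1 \<subseteq> P2"
    proof
      fix i assume "i \<in> (\<lambda>j. j - 1) ` P1"
      then obtain j where j: "j \<in> P1" "i = j - 1" by blast
      then obtain a b where sg: "seg w r j = pw a @ [X0, X0, X1] @ pw b" unfolding P1_def by blast
      have jl: "j + 2 * r + 1 \<le> length w" "rem w r j = v" "j \<noteq> 0" "eps w j = X1"
        using j(1) unfolding P1_def Jv_def by auto
      note S = shiftL[OF g _ jl(1) jl(4) sg]
      show "i \<in> P2" unfolding P2_def Jv_def using S jl j(2) by auto
    qed
    show "(\<lambda>j. j + 1) ` P2 \<subseteq> P1"
    proof
      fix i assume "i \<in> (\<lambda>j. j + 1) ` P2"
      then obtain j where j: "j \<in> P2" "i = j + 1" by blast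
      then obtain a b where sg: "rev (seg w r j) = pw a @ [X0, X0, X1] @ pw b" unfolding P2_def by blast
      have jl: "j + 2 * r + 1 \<le> length w" "rem w r j = v" "eps w j = X0" "eps w (j + 2 * r + 2) = X1"
        using j(1) unfolding P2_def Jv_def by auto
      note S = shiftR[OF g jl(1) jl(3) jl(4) sg]
      show "i \<in> P1" unfolding P1_def Jv_def using S jl j(2) by auto
    qed
  qed
  have reidx: "sum (tt w r) P2 = sum (\<lambda>j. tt w r (j - 1)) P1"
    using sum.reindex_bij_betw[OF bij, of "tt w r"] by simp
  have evP: "ev2 (sum (\<lambda>j. tt w r j + tt w r (j - 1)) P1)"
  proof (rule ev2_sum)
    fix j assume j: "j \<in> P1"
    then obtain a b where sg: "seg w r j = pw a @ [X0, X0, X1] @ pw b" unfolding P1_def by blast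
    have jl: "j + 2 * r + 1 \<le> length w" "j \<noteq> 0" "eps w j = X1" "eps w (j + 2 * r + 2) = X0"
      using j unfolding P1_def Jv_def by auto
    have ra: "r = a + b + 1" using seg_len[OF jl(1)] sg by simp
    note S = shiftL[OF g _ jl(1) jl(3) sg]
    have t1: "tt w r j = sc r * cc r a b" using tt_10[OF jl(3) jl(4) sg] ra by simp
    have rs: "rev (seg w r (j - 1)) = pw b @ [X0, X0, X1] @ pw a" using S jl(2) by simp
    have "length (seg w r (j - 1)) = length (rev (seg w r (j - 1)))" by simp
    also have "\<dots> = length (pw b @ [X0, X0, X1] @ pw a)" by (simp only: rs)
    also have "\<dots> = 2 * r + 1" using ra by simp
    finally have len': "length (seg w r (j - 1)) = 2 * r + 1" .
    have t2: "tt w r (j - 1) = - (sc r * cc r b a)"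
      using tt_01[of w "j - 1" r, OF _ _ len' rs] S jl(2) ra by (simp add: add.commute)
    show "ev2 (tt w r j + tt w r (j - 1))"
      unfolding t1 t2 using pair_sc_cc[OF ra] by simp
  qed
  have "sum (tt w r) (Jv w r v - {0}) = sum (\<lambda>j. tt w r j + tt w r (j - 1)) P1 + sum (tt w r) R"
    unfolding sum_split reidx sum.distrib by simp
  then show ?thesis using evP evR ev2_add by simp
qed



lemma sum_fun_apply: "(sum f A) x = sum (\<lambda>a. f a x) A"
  by (induction A rule: infinite_finite_induct) simp_all

lemma bij_lin:
  fixes G :: "'a \<Rightarrow> 'b \<Rightarrow> rat" and A :: "'a set" and B :: "'b set"
  assumes finA: "finite A" and finB: "finite B" and card: "card A = card B"
    and GB: "\<And>x y. x \<in> A \<Longrightarrow> G x y \<noteq> 0 \<Longrightarrow> y \<in> B"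
    and inj: "\<And>f. (\<forall>x. f x \<noteq> 0 \<longrightarrow> x \<in> A) \<Longrightarrow> (\<forall>y. (\<Sum>x\<in>A. f x * G x y) = 0) \<Longrightarrow> \<forall>x. f x = 0"
  shows "bij_betw (\<lambda>f y. \<Sum>x\<in>A. f x * G x y) {f. \<forall>x. f x \<noteq> 0 \<longrightarrow> x \<in> A} {g. \<forall>y. g y \<noteq> 0 \<longrightarrow> y \<in> B}"
proof -
  define F where "F = (\<lambda>f y. \<Sum>x\<in>A. f x * G x y)"
  define Dom where "Dom = {f :: 'a \<Rightarrow> rat. \<forall>x. f x \<noteq> 0 \<longrightarrow> x \<in> A}"
  define Cod where "Cod = {g :: 'b \<Rightarrow> rat. \<forall>y. g y \<noteq> 0 \<longrightarrow> y \<in> B}"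
  have into: "F ` Dom \<subseteq> Cod"
  proof
    fix g assume "g \<in> F ` Dom"
    then obtain f where g: "g = F f" by blast
    show "g \<in> Cod" unfolding Cod_def
    proof (intro CollectI allI impI)
      fix y assume "g y \<noteq> 0"
      then have "(\<Sum>x\<in>A. f x * G x y) \<noteq> 0" unfolding g F_def by simp
      then obtain x where "x \<in> A" "f x * G x y \<noteq> 0" by (rule sum.not_neutral_contains_not_neutral)
      then show "y \<in> B" using GB by simp
    qed
  qed
  have injF: "inj_on F Dom"
  proof (rule inj_onI)
    fix f1 f2 assume f1: "f1 \<in> Dom" and f2: "f2 \<in> Dom" and eq: "F f1 = F f2"
    define h where "h x = f1 x - f2 x" for x
    have "\<forall>x. h x \<noteq> 0 \<longrightarrow> x \<in> A"
    proof (intro allI impI)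
      fix x assume "h x \<noteq> 0"
      then have "f1 x \<noteq> 0 \<or> f2 x \<noteq> 0" unfolding h_def by auto
      then show "x \<in> A" using f1 f2 unfolding Dom_def by auto
    qed
    moreover have "\<forall>y. (\<Sum>x\<in>A. h x * G x y) = 0"
    proof
      fix y
      have "(\<Sum>x\<in>A. h x * G x y) = F f1 y - F f2 y"
        unfolding h_def F_def by (simp add: sum_subtractf left_diff_distrib)
      then show "(\<Sum>x\<in>A. h x * G x y) = 0" using eq by simp
    qed
    ultimately have "\<forall>x. h x = 0" by (rule inj)
    then show "f1 = f2" unfolding h_def by (simp add: fun_eq_iff)
  qed
  interpret V: vector_space "\<lambda>(c::rat) (h::'b \<Rightarrow> rat). (\<lambda>y. c * h y)"
    by unfold_locales (simp_all add: fun_eq_iff algebra_simps)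
  define dl where "dl (y::'b) = (\<lambda>z::'b. if z = y then 1 else (0::rat))" for y
  define E where "E = G ` A"
  have finE: "finite E" unfolding E_def using finA by simp
  have injG: "inj_on G A"
  proof (rule inj_onI)
    fix x1 x2 assume x: "x1 \<in> A" "x2 \<in> A" "G x1 = G x2"
    show "x1 = x2"
    proof (rule ccontr)
      assume ne: "x1 \<noteq> x2"
      define f where "f x = (if x = x1 then 1 else if x = x2 then -1 else (0::rat))" for x
      have "\<forall>x. f x \<noteq> 0 \<longrightarrow> x \<in> A" using x unfolding f_def by auto
      moreover have "\<forall>y. (\<Sum>x\<in>A. f x * G x y) = 0"
      proof
        fix y
        have "(\<Sum>x\<in>A. f x * G x y) = (\<Sum>x\<in>{x1, x2}. f x * G x y)"
          by (rule sum.mono_neutral_right) (use finA x in \<open>auto simp: f_def\<close>)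
        also have "\<dots> = G x1 y - G x2 y" using ne by (simp add: f_def)
        finally show "(\<Sum>x\<in>A. f x * G x y) = 0" using x by simp
      qed
      ultimately have "\<forall>x. f x = 0" by (rule inj)
      then show False unfolding f_def by (metis one_neq_zero)
    qed
  qed
  have cardE: "card E = card A" unfolding E_def using card_image[OF injG] .
  have indE: "V.independent E"
  proof
    assume "V.dependent E"
    then obtain t u where t: "finite t" "t \<subseteq> E" "(\<Sum>v\<in>t. (\<lambda>y. u v * v y)) = 0" and v0: "\<exists>v\<in>t. u v \<noteq> 0"
      unfolding V.dependent_explicit by blast
    define f where "f x = (if x \<in> A \<and> G x \<in> t then u (G x) else 0)" for x
    have "\<forall>x. f x \<noteq> 0 \<longrightarrow> x \<in> A" unfolding f_def by auto
    moreover have "\<forall>y. (\<Sum>x\<in>A. f x * G x y) = 0"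
    proof
      fix y
      let ?A' = "{x \<in> A. G x \<in> t}"
      have "(\<Sum>x\<in>A. f x * G x y) = (\<Sum>x\<in>?A'. u (G x) * G x y)"
        unfolding f_def using finA by (simp add: sum.inter_filter if_distrib if_distribR cong: if_cong)
      also have "\<dots> = (\<Sum>v\<in>G ` ?A'. u v * v y)"
        by (rule sum.reindex[symmetric, unfolded comp_def]) (rule inj_on_subset[OF injG], auto)
      also have "G ` ?A' = t" using t(2) unfolding E_def by auto
      also have "(\<Sum>v\<in>t. u v * v y) = (\<Sum>v\<in>t. (\<lambda>y. u v * v y)) y" by (simp add: sum_fun_apply)
      also have "\<dots> = 0" using t(3) by simp
      finally show "(\<Sum>x\<in>A. f x * G x y) = 0" .
    qed
    ultimately have f0: "\<forall>x. f x = 0" by (rule inj)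
    from v0 obtain v where v: "v \<in> t" "u v \<noteq> 0" by blast
    then obtain x where "x \<in> A" "v = G x" using t(2) unfolding E_def by blast
    then have "f x = u v" using v unfolding f_def by simp
    then show False using f0 v by simp
  qed
  have spanCod: "Cod \<subseteq> V.span (dl ` B)"
  proof
    fix g assume g: "g \<in> Cod"
    have "g = (\<Sum>y\<in>B. (\<lambda>z. g y * dl y z))"
    proof
      fix z
      have "(\<Sum>y\<in>B. (\<lambda>z. g y * dl y z)) z = (\<Sum>y\<in>B. g y * dl y z)" by (simp add: sum_fun_apply)
      also have "\<dots> = (\<Sum>y\<in>B. if y = z then g z else 0)"
        by (rule sum.cong) (auto simp: dl_def)
      also have "\<dots> = (if z \<in> B then g z else 0)" using finB by (simp add: sum.delta)
      also have "\<dots> = g z" using g unfolding Cod_def by auto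
      finally show "g z = (\<Sum>y\<in>B. (\<lambda>z. g y * dl y z)) z" by simp
    qed
    also have "\<dots> \<in> V.span (dl ` B)"
      by (intro V.span_sum V.span_scale V.span_base) auto
    finally show "g \<in> V.span (dl ` B)" .
  qed
  have ECod: "E \<subseteq> Cod" unfolding E_def Cod_def using GB by auto
  have surj: "Cod \<subseteq> F ` Dom"
  proof
    fix g assume g: "g \<in> Cod"
    have "g \<in> V.span E"
    proof (rule ccontr)
      assume ng: "g \<notin> V.span E"
      have ind: "V.independent (insert g E)" by (rule V.independent_insertI[OF ng indE])
      have "insert g E \<subseteq> V.span (dl ` B)" using g ECod spanCod by auto
      then have "card (insert g E) \<le> card (dl ` B)"
        using V.independent_span_bound[OF _ ind] finB by auto
      moreover have "card (dl ` B) \<le> card B" using finB by (rule card_image_le)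
      moreover have "g \<notin> E" using ng V.span_base by blast
      then have "card (insert g E) = card A + 1" using finE cardE by simp
      ultimately show False using card by simp
    qed
    then obtain u where u: "g = (\<Sum>v\<in>E. (\<lambda>y. u v * v y))"
      unfolding V.span_finite[OF finE] by blast
    define f where "f x = (if x \<in> A then u (G x) else 0)" for x
    have "f \<in> Dom" unfolding Dom_def f_def by auto
    moreover have "F f = g"
    proof
      fix y
      have "F f y = (\<Sum>x\<in>A. u (G x) * G x y)" unfolding F_def f_def by (rule sum.cong) auto
      also have "\<dots> = (\<Sum>v\<in>E. u v * v y)" unfolding E_def
        by (rule sum.reindex[symmetric, unfolded comp_def]) (rule injG)
      also have "\<dots> = g y" unfolding u by (simp add: sum_fun_apply)
      finally show "F f y = g y" .
    qed
    ultimately show "g \<in> F ` Dom" by blast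
  qed
  have "bij_betw F Dom Cod"
    unfolding bij_betw_def using injF into surj by blast
  then show ?thesis unfolding F_def Dom_def Cod_def .
qed



lemma finite_grB: "finite (grB N l)"
proof -
  have U: "(UNIV :: letter set) = {X0, X1}" using letter.exhaust by auto
  have "grB N l \<subseteq> {xs. set xs \<subseteq> UNIV \<and> length xs = N}" unfolding grB_def by auto
  moreover have "finite {xs :: word. set xs \<subseteq> UNIV \<and> length xs = N}"
    by (rule finite_lists_length_eq) (simp add: U)
  ultimately show ?thesis by (rule finite_subset)
qed

lemma dphi_cod:
  assumes "dphi N l w (r, v) \<noteq> 0" "length w = N"
  shows "1 \<le> r \<and> 2 * r + 1 \<le> N \<and> v \<in> grB (N - (2 * r + 1)) (l - 1)"
proof -
  have c: "1 \<le> r \<and> 2 * r + 1 \<le> N" and pt: "phi_tensor (partial_l l r w) v \<noteq> 0"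
    using assms(1) unfolding dphi_def by (auto split: if_splits)
  from pt obtain u where "u \<in> {u. partial_l l r w (u, v) \<noteq> 0}"
    "phi_word u * partial_l l r w (u, v) \<noteq> 0"
    unfolding phi_tensor_def by (rule sum.not_neutral_contains_not_neutral)
  then have hl: "has_level (l - 1) v" and p: "partial r w (u, v) \<noteq> 0"
    unfolding partial_l_def by (auto split: if_splits)
  from p obtain j where j: "j \<in> {j. j + 2 * r + 1 \<le> length w}"
    "tensor (Ifun (eps w j) (take (2 * r + 1) (drop j w)) (eps w (j + 2 * r + 2)))
             (monom 1 (take j w @ drop (j + 2 * r + 1) w)) (u, v) \<noteq> 0"
    unfolding partial_def by (rule sum.not_neutral_contains_not_neutral)
  then have "v = take j w @ drop (j + 2 * r + 1) w"
    unfolding tensor_def monom_def by (auto split: if_splits)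
  then have "length v = N - (2 * r + 1)" using j(1) assms(2) by simp
  then show ?thesis using c hl unfolding grB_def by simp
qed

lemma tt0_nonunit:
  assumes "r \<ge> 1" "2 * r + 1 \<le> length w" "\<not> ev2 (tt w r 0)"
  shows "\<exists>a b. a + b + 1 = r \<and> take (2 * r + 1) w = pw a @ [X0, X0, X1] @ pw b"
proof -
  have l0: "0 + 2 * r + 1 \<le> length w" using assms(2) by simp
  from tt_cases[OF assms(1) l0] assms(3) obtain a b where sg: "seg w r 0 = pw a @ [X0, X0, X1] @ pw b"
    by auto
  have "length (seg w r 0) = 2 * r + 1" using seg_len[OF l0] .
  then have "a + b + 1 = r" using sg by simp
  moreover have "take (2 * r + 1) w = pw a @ [X0, X0, X1] @ pw b" using sg unfolding seg_def by simp
  ultimately show ?thesis by blast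
qed

lemma tt0_unit:
  assumes "has_level (l - 1) v"
  shows "\<not> ev2 (tt (pw M @ X0 # X0 # X1 # v) (M + 1) 0)"
proof -
  let ?w = "pw M @ X0 # X0 # X1 # v"
  have e2: "eps ?w (0 + 2 * (M + 1) + 2) = X0"
  proof (cases v)
    case Nil then show ?thesis by (simp add: eps_out)
  next
    case (Cons x v')
    have "v ! 0 = X0" using goodD0[OF good_level[OF assms]] Cons by simp
    then have x: "x = X0" using Cons by simp
    have "eps ?w (0 + 2 * (M + 1) + 2) = ?w ! (Suc (Suc (Suc (2 * M))))"
      using eps_in[of "0 + 2 * (M + 1) + 2" ?w] Cons by simp
    also have "\<dots> = x" using Cons by (simp add: nth_append)
    finally show ?thesis using x by simp
  qed
  have e1: "eps ?w 0 = X1" by simp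
  have wa: "?w = (pw M @ [X0, X0, X1] @ pw 0) @ v" by simp
  have len: "length (pw M @ [X0, X0, X1] @ pw 0) = 2 * (M + 1) + 1" by simp
  have sg: "seg ?w (M + 1) 0 = pw M @ [X0, X0, X1] @ pw 0"
    unfolding seg_def drop_0 wa by (rule take_exact[OF len])
  have "tt ?w (M + 1) 0 = sc (M + 1) * cc (M + 0 + 1) M 0"
    by (rule tt_10[OF e1 e2 sg])
  then show ?thesis using unit_sc_cc[of M] by simp
qed

lemma Phi_inj:
  assumes l1: "l \<ge> 1" and fD: "\<forall>x. f x \<noteq> 0 \<longrightarrow> x \<in> grB N l"
    and z: "\<forall>y. (\<Sum>x\<in>grB N l. f x * dphi N l x y) = 0"
  shows "\<forall>x. f x = 0"
proof (rule ccontr)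
  assume "\<not> (\<forall>x. f x = 0)"
  then obtain w0 where w0: "f w0 \<noteq> 0" by blast
  then have w0B: "w0 \<in> grB N l" using fD by blast
  obtain c where c: "c \<noteq> 0" "\<forall>w\<in>grB N l. z2 (c * f w)" "\<exists>w\<in>grB N l. \<not> ev2 (c * f w)"
    using normalize_2adic[of "grB N l" w0 f, OF finite_grB w0B w0] by blast
  define g where "g w = c * f w" for w
  from c(3) obtain w1 where w1: "w1 \<in> grB N l \<and> \<not> ev2 (g w1)" unfolding g_def by blast
  obtain ws where ws: "ws \<in> grB N l \<and> \<not> ev2 (g ws)"
    and wsmin: "\<forall>w. w \<in> grB N l \<and> \<not> ev2 (g w) \<longrightarrow> a0 ws \<le> a0 w"
    using ex_has_least_nat[of "\<lambda>w. w \<in> grB N l \<and> \<not> ev2 (g w)" w1 a0] w1 by blast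
  have wsB: "length ws = N" "has_level l ws" using ws unfolding grB_def by auto
  obtain M vs where wsd: "ws = pw M @ X0 # X0 # X1 # vs" and hv: "has_level (l - 1) vs"
    using level_decomp[OF wsB(2) l1] by blast
  define r where "r = M + 1"
  have lenN: "N = 2 * M + 3 + length vs" using wsB(1) wsd by simp
  have r1: "1 \<le> r" "2 * r + 1 \<le> N" using lenN r_def by auto
  define D where "D w = sc r * dphi N l w (r, vs)" for w
  have Dsum: "\<And>w. D w = sum (tt w r) (Jv w r vs)" unfolding D_def using dphi_eval[OF r1 hv] by simp
  have zD: "\<And>w. z2 (D w)"
  proof -
    fix w
    show "z2 (D w)" unfolding Dsum
    proof (rule z2_sum)
      fix j assume "j \<in> Jv w r vs"
      then have "j + 2 * r + 1 \<le> length w" unfolding Jv_def by simp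
      then show "z2 (tt w r j)" using tt_cases[OF r1(1)] by blast
    qed
  qed
  have Dsplit: "\<And>w. D w = (if 0 \<in> Jv w r vs then tt w r 0 else 0) + sum (tt w r) (Jv w r vs - {0})"
  proof -
    fix w
    show "D w = (if 0 \<in> Jv w r vs then tt w r 0 else 0) + sum (tt w r) (Jv w r vs - {0})"
    proof (cases "0 \<in> Jv w r vs")
      case True
      then show ?thesis unfolding Dsum using sum.remove[OF finite_Jv True] by simp
    next
      case False
      then have "Jv w r vs - {0} = Jv w r vs" by blast
      then show ?thesis unfolding Dsum using False by simp
    qed
  qed
  have A: "\<And>w. w \<in> grB N l \<Longrightarrow> w \<noteq> ws \<Longrightarrow> ev2 (g w * D w)"
  proof -
    fix w assume wB: "w \<in> grB N l" and wne: "w \<noteq> ws"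
    have zg: "z2 (g w)" using c(2) wB unfolding g_def by blast
    show "ev2 (g w * D w)"
    proof (cases "ev2 (g w)")
      case True then show ?thesis using ev2_mult zD by blast
    next
      case False
      then have amin: "a0 ws \<le> a0 w" using wsmin wB by blast
      have gw: "good w" using wB good_level unfolding grB_def by auto
      have ev0: "ev2 (if 0 \<in> Jv w r vs then tt w r 0 else 0)"
      proof (cases "0 \<in> Jv w r vs \<and> \<not> ev2 (tt w r 0)")
        case True
        then have j0: "2 * r + 1 \<le> length w" "rem w r 0 = vs" unfolding Jv_def by auto
        obtain a b where ab: "a + b + 1 = r" "take (2 * r + 1) w = pw a @ [X0, X0, X1] @ pw b"
          using tt0_nonunit[OF r1(1) j0(1)] True by blast
        have dv: "drop (2 * r + 1) w = vs" using j0(2) unfolding rem_def by simp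
        have weq: "w = pw a @ X0 # X0 # X1 # pw b @ vs"
          using ab(2) dv append_take_drop_id[of "2 * r + 1" w] by simp
        then have "a0 w = a" by simp
        then have "M \<le> a" using amin wsd by simp
        then have "a = M" "b = 0" using ab(1) r_def by auto
        then have "w = ws" using weq wsd by simp
        then show ?thesis using wne by simp
      next
        case False then show ?thesis by auto
      qed
      have "ev2 (D w)" unfolding Dsplit[of w] by (rule ev2_add[OF ev0 pair_ev2[OF gw r1(1)]])
      then show ?thesis by (rule ev2_mult2[OF zg])
    qed
  qed
  have wsB': "ws \<in> grB N l" using ws by blast
  have B: "\<not> ev2 (g ws * D ws)"
  proof -
    have dv: "drop (2 * r + 1) ws = vs" unfolding wsd r_def by simp
    have j0: "0 \<in> Jv ws r vs" unfolding Jv_def rem_def using dv r1 wsB(1) by simp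
    have u0: "\<not> ev2 (tt ws r 0)" using tt0_unit[OF hv, of M] unfolding wsd r_def .
    have gws: "good ws" using good_level[OF wsB(2)] .
    have "\<not> ev2 (D ws)" unfolding Dsplit[of ws] using j0 nonunit_add[OF u0 pair_ev2[OF gws r1(1)]] by simp
    moreover have "z2 (g ws)" using c(2) wsB' unfolding g_def by blast
    ultimately show ?thesis using unit_mult ws zD by blast
  qed
  have S: "(\<Sum>w\<in>grB N l. g w * D w) = sc r * c * (\<Sum>w\<in>grB N l. f w * dphi N l w (r, vs))"
    unfolding g_def D_def by (simp add: sum_distrib_left algebra_simps)
  then have S0: "(\<Sum>w\<in>grB N l. g w * D w) = 0" using z by simp
  have split: "(\<Sum>w\<in>grB N l. g w * D w) = g ws * D ws + (\<Sum>w\<in>grB N l - {ws}. g w * D w)"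
    using sum.remove[OF finite_grB wsB'] by simp
  have "ev2 (\<Sum>w\<in>grB N l - {ws}. g w * D w)" by (rule ev2_sum) (use A in auto)
  then have "\<not> ev2 (\<Sum>w\<in>grB N l. g w * D w)" unfolding split by (rule nonunit_add[OF B])
  then show False using S0 by simp
qed

definition CI :: "nat \<Rightarrow> nat \<Rightarrow> (nat \<times> word) set" where
  "CI N l = {(r, v). 1 \<le> r \<and> 2 * r + 1 \<le> N \<and> v \<in> grB (N - (2 * r + 1)) (l - 1)}"

lemma bij_CI:
  assumes l1: "l \<ge> 1"
  shows "bij_betw (\<lambda>w. (a0 w + 1, drop (2 * a0 w + 3) w)) (grB N l) (CI N l)"
proof (rule bij_betw_byWitness[where f' = "\<lambda>(r, v). pw (r - 1) @ X0 # X0 # X1 # v"])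
  show "\<forall>w\<in>grB N l. (case (a0 w + 1, drop (2 * a0 w + 3) w) of (r, v) \<Rightarrow> pw (r - 1) @ X0 # X0 # X1 # v) = w"
  proof
    fix w assume "w \<in> grB N l"
    then obtain M v where "w = pw M @ X0 # X0 # X1 # v"
      using level_decomp[OF _ l1] unfolding grB_def by blast
    then show "(case (a0 w + 1, drop (2 * a0 w + 3) w) of (r, v) \<Rightarrow> pw (r - 1) @ X0 # X0 # X1 # v) = w"
      by simp
  qed
  show "\<forall>p\<in>CI N l. (\<lambda>w. (a0 w + 1, drop (2 * a0 w + 3) w)) (case p of (r, v) \<Rightarrow> pw (r - 1) @ X0 # X0 # X1 # v) = p"
  proof
    fix p assume "p \<in> CI N l"
    then obtain r v where p: "p = (r, v)" "1 \<le> r" unfolding CI_def by blast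
    have "drop (2 * (r - 1) + 3) (pw (r - 1) @ X0 # X0 # X1 # v) = v" by simp
    then show "(\<lambda>w. (a0 w + 1, drop (2 * a0 w + 3) w)) (case p of (r, v) \<Rightarrow> pw (r - 1) @ X0 # X0 # X1 # v) = p"
      using p by simp
  qed
  show "(\<lambda>w. (a0 w + 1, drop (2 * a0 w + 3) w)) ` grB N l \<subseteq> CI N l"
  proof
    fix p assume "p \<in> (\<lambda>w. (a0 w + 1, drop (2 * a0 w + 3) w)) ` grB N l"
    then obtain w where w: "w \<in> grB N l" "p = (a0 w + 1, drop (2 * a0 w + 3) w)" by blast
    then obtain M v where wd: "w = pw M @ X0 # X0 # X1 # v" and hv: "has_level (l - 1) v"
      using level_decomp[OF _ l1] unfolding grB_def by blast
    have "length w = N" using w(1) unfolding grB_def by simp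
    then have "N = 2 * M + 3 + length v" using wd by simp
    then show "p \<in> CI N l" using w(2) wd hv unfolding CI_def grB_def by simp
  qed
  show "(\<lambda>(r, v). pw (r - 1) @ X0 # X0 # X1 # v) ` CI N l \<subseteq> grB N l"
  proof
    fix w assume "w \<in> (\<lambda>(r, v). pw (r - 1) @ X0 # X0 # X1 # v) ` CI N l"
    then obtain p where p: "p \<in> CI N l" "w = (\<lambda>(r, v). pw (r - 1) @ X0 # X0 # X1 # v) p" by blast
    obtain r v where "p = (r, v)" by (cases p)
    then have rv: "(r, v) \<in> CI N l" "w = pw (r - 1) @ X0 # X0 # X1 # v" using p by auto
    then have c: "1 \<le> r" "2 * r + 1 \<le> N" "length v = N - (2 * r + 1)" "has_level (l - 1) v"
      unfolding CI_def grB_def by auto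
    have "length w = N" using rv(2) c by simp
    moreover have "has_level l w" using level_compose[OF c(4) l1] rv(2) by simp
    ultimately show "w \<in> grB N l" unfolding grB_def by simp
  qed
qed

theorem mainTheorem17:
  fixes N l :: nat
  assumes "N \<ge> 1" and "l \<ge> 1"
  shows "bij_betw (Phi N l) (GrDom N l) (GrCod N l)"
proof -
  have bCI: "bij_betw (\<lambda>w. (a0 w + 1, drop (2 * a0 w + 3) w)) (grB N l) (CI N l)"
    by (rule bij_CI[OF assms(2)])
  have finCI: "finite (CI N l)" using bij_betw_finite[OF bCI] finite_grB by blast
  have card: "card (grB N l) = card (CI N l)" using bij_betw_same_card[OF bCI] .
  have P: "Phi N l = (\<lambda>f y. \<Sum>x\<in>grB N l. f x * dphi N l x y)"
    unfolding Phi_def by (simp add: fun_eq_iff)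
  have D: "GrDom N l = {f. \<forall>x. f x \<noteq> 0 \<longrightarrow> x \<in> grB N l}" unfolding GrDom_def ..
  have C: "GrCod N l = {g. \<forall>y. g y \<noteq> 0 \<longrightarrow> y \<in> CI N l}"
    unfolding GrCod_def CI_def by auto
  show ?thesis unfolding P D C
  proof (rule bij_lin[OF finite_grB finCI card])
    fix x y assume x: "x \<in> grB N l" and "dphi N l x y \<noteq> 0"
    then show "y \<in> CI N l" using dphi_cod[of N l x "fst y" "snd y"] x
      unfolding CI_def grB_def by (cases y) auto
  next
    fix f :: "word \<Rightarrow> rat"
    assume "\<forall>x. f x \<noteq> 0 \<longrightarrow> x \<in> grB N l" "\<forall>y. (\<Sum>x\<in>grB N l. f x * dphi N l x y) = 0"
    then show "\<forall>x. f x = 0" by (rule Phi_inj[OF assms(2)])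
  qed
qed

end
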